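(* Let $S^0$ be an adequate semigroup with semilattice of idempotents $E^0$, let $I$ be a left regular band having $E^0$ as a semilattice transversal, and suppose there is a left action $(x,e)\mapsto x\ast e$ of $S^0$ on $I$ (so $(xy)\ast e=x\ast(y\ast e)$) with $x\ast(ef)=(x\ast e)(x\ast f)$ for all $x\in S^0$, $e,f\in I$. Let $W=\{(e,x)\in I\times S^0: e\in L_{x^+}\}$ with multiplication $(e,x)(g,y)=(e(x\ast g),xy)$, and suppose that $x\ast y^+=(xy)^+$ for all $x,y\in S^0$. Then: 1. for all $x,y\in S^0$ and $f\in L_{y^+}$, $x\ast f\in L_{(xy)^+}$; 2. $E(W)=\{(e,x)\in W: x\in E^0\}$; 3. $E(W)$ is a band.
   Context: For a semigroup $T$, $E(T)$ is its set of idempotents. In an adequate semigroup (abundant, i.e. every $\mathcal{R}^\ast$- and $\mathcal{L}^\ast$-class contains an idempotent, with commuting idempotents) $x^+$ denotes the unique idempotent $\mathcal{R}^\ast$-related to $x$, where $a\,\mathcal{R}^\ast\,b$ iff $xa=ya\Leftrightarrow xb=yb$ for all $x,y\in T^1$. A left regular band satisfies $xyx=xy$; $E^0$ is a semilattice transversal of $I$ if $E^0$ is a subsemilattice of $I$ and each element of $I$ has exactly one inverse in $E^0$. For $x\in E^0$, $L_x$ is the $\mathcal{L}$-class of $x$ in $I$. *)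

theory Defs
  imports Main
begin

definition semigroup_on :: "'a set \<Rightarrow> ('a \<Rightarrow> 'a \<Rightarrow> 'a) \<Rightarrow> bool" where
  "semigroup_on A m \<longleftrightarrow> (\<forall>x\<in>A. \<forall>y\<in>A. m x y \<in> A) \<and>
     (\<forall>x\<in>A. \<forall>y\<in>A. \<forall>z\<in>A. m (m x y) z = m x (m y z))"

definition idems :: "'a set \<Rightarrow> ('a \<Rightarrow> 'a \<Rightarrow> 'a) \<Rightarrow> 'a set" where
  "idems A m = {e\<in>A. m e e = e}"

(* elements of T^1: None is the adjoined identity *)
definition carrier1 :: "'a set \<Rightarrow> 'a option set" where
  "carrier1 A = Some ` A \<union> {None}"

fun lmult1 :: "('a \<Rightarrow> 'a \<Rightarrow> 'a) \<Rightarrow> 'a option \<Rightarrow> 'a \<Rightarrow> 'a" where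
  "lmult1 m None a = a"
| "lmult1 m (Some x) a = m x a"

fun rmult1 :: "('a \<Rightarrow> 'a \<Rightarrow> 'a) \<Rightarrow> 'a \<Rightarrow> 'a option \<Rightarrow> 'a" where
  "rmult1 m a None = a"
| "rmult1 m a (Some x) = m a x"

definition Rstar :: "'a set \<Rightarrow> ('a \<Rightarrow> 'a \<Rightarrow> 'a) \<Rightarrow> 'a \<Rightarrow> 'a \<Rightarrow> bool" where
  "Rstar A m a b \<longleftrightarrow> a \<in> A \<and> b \<in> A \<and>
     (\<forall>x\<in>carrier1 A. \<forall>y\<in>carrier1 A. lmult1 m x a = lmult1 m y a \<longleftrightarrow> lmult1 m x b = lmult1 m y b)"

definition Lstar :: "'a set \<Rightarrow> ('a \<Rightarrow> 'a \<Rightarrow> 'a) \<Rightarrow> 'a \<Rightarrow> 'a \<Rightarrow> bool" where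
  "Lstar A m a b \<longleftrightarrow> a \<in> A \<and> b \<in> A \<and>
     (\<forall>x\<in>carrier1 A. \<forall>y\<in>carrier1 A. rmult1 m a x = rmult1 m a y \<longleftrightarrow> rmult1 m b x = rmult1 m b y)"

definition abundant :: "'a set \<Rightarrow> ('a \<Rightarrow> 'a \<Rightarrow> 'a) \<Rightarrow> bool" where
  "abundant A m \<longleftrightarrow> (\<forall>a\<in>A. (\<exists>e\<in>idems A m. Rstar A m a e) \<and> (\<exists>f\<in>idems A m. Lstar A m a f))"

definition adequate :: "'a set \<Rightarrow> ('a \<Rightarrow> 'a \<Rightarrow> 'a) \<Rightarrow> bool" where
  "adequate A m \<longleftrightarrow> semigroup_on A m \<and> abundant A m \<and>
     (\<forall>e\<in>idems A m. \<forall>f\<in>idems A m. m e f = m f e)"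

definition plus :: "'a set \<Rightarrow> ('a \<Rightarrow> 'a \<Rightarrow> 'a) \<Rightarrow> 'a \<Rightarrow> 'a" where
  "plus A m x = (THE e. e \<in> idems A m \<and> Rstar A m x e)"

definition band_on :: "'a set \<Rightarrow> ('a \<Rightarrow> 'a \<Rightarrow> 'a) \<Rightarrow> bool" where
  "band_on A m \<longleftrightarrow> semigroup_on A m \<and> (\<forall>x\<in>A. m x x = x)"

definition left_regular_band :: "'a set \<Rightarrow> ('a \<Rightarrow> 'a \<Rightarrow> 'a) \<Rightarrow> bool" where
  "left_regular_band A m \<longleftrightarrow> band_on A m \<and> (\<forall>x\<in>A. \<forall>y\<in>A. m (m x y) x = m x y)"

definition Lrel :: "'a set \<Rightarrow> ('a \<Rightarrow> 'a \<Rightarrow> 'a) \<Rightarrow> 'a \<Rightarrow> 'a \<Rightarrow> bool" where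
  "Lrel A m a b \<longleftrightarrow> a \<in> A \<and> b \<in> A \<and>
     (\<exists>x\<in>carrier1 A. a = lmult1 m x b) \<and> (\<exists>y\<in>carrier1 A. b = lmult1 m y a)"

definition Lclass :: "'a set \<Rightarrow> ('a \<Rightarrow> 'a \<Rightarrow> 'a) \<Rightarrow> 'a \<Rightarrow> 'a set" where
  "Lclass A m x = {a. Lrel A m a x}"

definition is_inverse :: "('a \<Rightarrow> 'a \<Rightarrow> 'a) \<Rightarrow> 'a \<Rightarrow> 'a \<Rightarrow> bool" where
  "is_inverse m a b \<longleftrightarrow> m (m a b) a = a \<and> m (m b a) b = b"

definition semilattice_transversal :: "'a set \<Rightarrow> 'a set \<Rightarrow> ('a \<Rightarrow> 'a \<Rightarrow> 'a) \<Rightarrow> bool" where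
  "semilattice_transversal E I m \<longleftrightarrow> E \<subseteq> I \<and>
     (\<forall>e\<in>E. \<forall>f\<in>E. m e f \<in> E \<and> m e f = m f e) \<and>
     (\<forall>a\<in>I. \<exists>!b. b \<in> E \<and> is_inverse m a b)"

definition Wset :: "'a set \<Rightarrow> ('a \<Rightarrow> 'a \<Rightarrow> 'a) \<Rightarrow> 'a set \<Rightarrow> ('a \<Rightarrow> 'a \<Rightarrow> 'a) \<Rightarrow> ('a \<times> 'a) set" where
  "Wset S mS I mI = {(e, x). e \<in> I \<and> x \<in> S \<and> e \<in> Lclass I mI (plus S mS x)}"

definition Wmult :: "('a \<Rightarrow> 'a \<Rightarrow> 'a) \<Rightarrow> ('a \<Rightarrow> 'a \<Rightarrow> 'a) \<Rightarrow> ('a \<Rightarrow> 'a \<Rightarrow> 'a)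
    \<Rightarrow> 'a \<times> 'a \<Rightarrow> 'a \<times> 'a \<Rightarrow> 'a \<times> 'a" where
  "Wmult mS mI act p q = (mI (fst p) (act (snd p) (fst q)), mS (snd p) (snd q))"

end

theory Submission
  imports Defs
begin

lemma plus_idem:
  assumes adeq: "adequate S mS" and x: "x \<in> idems S mS"
  shows "plus S mS x = x"
proof -
  have xS: "x \<in> S" and xx: "mS x x = x" using x by (auto simp: idems_def)
  have comm: "\<forall>e\<in>idems S mS. \<forall>f\<in>idems S mS. mS e f = mS f e"
    using adeq by (simp add: adequate_def)
  have R: "Rstar S mS x x" using xS by (simp add: Rstar_def)
  show ?thesis unfolding plus_def
  proof (rule the_equality)
    show "x \<in> idems S mS \<and> Rstar S mS x x" using x R by simp
  next
    fix e assume h: "e \<in> idems S mS \<and> Rstar S mS x e"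
    hence eS: "e \<in> S" and ee: "mS e e = e" and Re: "Rstar S mS x e"
      by (auto simp: idems_def)
    have c1: "Some x \<in> carrier1 S" "None \<in> carrier1 S" "Some e \<in> carrier1 S"
      using xS eS by (auto simp: carrier1_def)
    have A: "lmult1 mS (Some x) x = lmult1 mS None x \<longleftrightarrow> lmult1 mS (Some x) e = lmult1 mS None e"
      using Re c1 unfolding Rstar_def by blast
    have B: "lmult1 mS (Some e) x = lmult1 mS None x \<longleftrightarrow> lmult1 mS (Some e) e = lmult1 mS None e"
      using Re c1 unfolding Rstar_def by blast
    have "mS x e = e" using A xx by simp
    moreover have "mS e x = x" using B ee by simp
    moreover have "mS x e = mS e x" using comm x h by blast
    ultimately show "e = x" by simp
  qed
qed

lemma lrel_decomp:
  assumes "semigroup_on I mI" "\<forall>z\<in>I. mI z z = z" "Lrel I mI e x"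
  shows "e \<in> I \<and> x \<in> I \<and> mI e x = e \<and> mI x e = x"
proof -
  from assms(3) obtain a b where ab: "e \<in> I" "x \<in> I" "a \<in> carrier1 I" "b \<in> carrier1 I"
    "e = lmult1 mI a x" "x = lmult1 mI b e" using assms(3) unfolding Lrel_def by (elim conjE bexE) (rule that; assumption)
  have "mI e x = e"
  proof (cases a)
    case None
    hence "e = x" using ab(5) by simp
    thus ?thesis using ab(2) assms(2) by simp
  next
    case (Some a')
    hence a': "a' \<in> I" using ab(3) by (auto simp: carrier1_def)
    have e: "e = mI a' x" using ab(5) Some by simp
    have "mI (mI a' x) x = mI a' (mI x x)" using assms(1) a' ab(2) by (simp add: semigroup_on_def)
    also have "\<dots> = mI a' x" using assms(2) ab(2) by simp
    finally show ?thesis using e by simp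
  qed
  moreover have "mI x e = x"
  proof (cases b)
    case None
    hence "x = e" using ab(6) by simp
    thus ?thesis using ab(1) assms(2) by simp
  next
    case (Some b')
    hence b': "b' \<in> I" using ab(4) by (auto simp: carrier1_def)
    have e: "x = mI b' e" using ab(6) Some by simp
    have "mI (mI b' e) e = mI b' (mI e e)" using assms(1) b' ab(1) by (simp add: semigroup_on_def)
    also have "\<dots> = mI b' e" using assms(2) ab(1) by simp
    finally show ?thesis using e by simp
  qed
  ultimately show ?thesis using ab(1) ab(2) by simp
qed

theorem lemma3p1:
  fixes S I :: "'a set" and mS mI act :: "'a \<Rightarrow> 'a \<Rightarrow> 'a"
  assumes adeq: "adequate S mS"
    and lrb: "left_regular_band I mI"
    and transv: "semilattice_transversal (idems S mS) I mI"
    and sub: "\<forall>e\<in>idems S mS. \<forall>f\<in>idems S mS. mI e f = mS e f"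
    and act_closed: "\<forall>x\<in>S. \<forall>e\<in>I. act x e \<in> I"
    and act_assoc: "\<forall>x\<in>S. \<forall>y\<in>S. \<forall>e\<in>I. act (mS x y) e = act x (act y e)"
    and act_hom: "\<forall>x\<in>S. \<forall>e\<in>I. \<forall>f\<in>I. act x (mI e f) = mI (act x e) (act x f)"
    and act_plus: "\<forall>x\<in>S. \<forall>y\<in>S. act x (plus S mS y) = plus S mS (mS x y)"
  shows "(\<forall>x\<in>S. \<forall>y\<in>S. \<forall>f\<in>Lclass I mI (plus S mS y).
            act x f \<in> Lclass I mI (plus S mS (mS x y)))
       \<and> idems (Wset S mS I mI) (Wmult mS mI act) = {(e, x) \<in> Wset S mS I mI. x \<in> idems S mS}
       \<and> band_on (idems (Wset S mS I mI) (Wmult mS mI act)) (Wmult mS mI act)"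
proof -
  have semI: "semigroup_on I mI" and idI: "\<forall>z\<in>I. mI z z = z"
    using lrb by (auto simp: left_regular_band_def band_on_def)
  have semS: "semigroup_on S mS" and commS: "\<forall>e\<in>idems S mS. \<forall>f\<in>idems S mS. mS e f = mS f e"
    using adeq by (auto simp: adequate_def)
  have EI: "idems S mS \<subseteq> I" using transv by (simp add: semilattice_transversal_def)
  have mIc: "\<And>a b. a \<in> I \<Longrightarrow> b \<in> I \<Longrightarrow> mI a b \<in> I" using semI by (simp add: semigroup_on_def)
  have mIa: "\<And>a b c. a \<in> I \<Longrightarrow> b \<in> I \<Longrightarrow> c \<in> I \<Longrightarrow> mI (mI a b) c = mI a (mI b c)"
    using semI by (simp add: semigroup_on_def)
  have mSc: "\<And>a b. a \<in> S \<Longrightarrow> b \<in> S \<Longrightarrow> mS a b \<in> S" using semS by (simp add: semigroup_on_def)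
  have mSa: "\<And>a b c. a \<in> S \<Longrightarrow> b \<in> S \<Longrightarrow> c \<in> S \<Longrightarrow> mS (mS a b) c = mS a (mS b c)"
    using semS by (simp add: semigroup_on_def)
  have P1: "\<forall>x\<in>S. \<forall>y\<in>S. \<forall>f\<in>Lclass I mI (plus S mS y).
            act x f \<in> Lclass I mI (plus S mS (mS x y))"
  proof (intro ballI)
    fix x y f assume xS: "x \<in> S" and yS: "y \<in> S" and f: "f \<in> Lclass I mI (plus S mS y)"
    from f obtain a b where ab: "f \<in> I" "plus S mS y \<in> I" "a \<in> carrier1 I" "b \<in> carrier1 I"
      "f = lmult1 mI a (plus S mS y)" "plus S mS y = lmult1 mI b f"
      using f unfolding Lclass_def Lrel_def mem_Collect_eq by (elim conjE bexE) (rule that; assumption)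
    have key: "\<And>c z. c \<in> carrier1 I \<Longrightarrow> z \<in> I \<Longrightarrow>
        map_option (act x) c \<in> carrier1 I \<and> act x (lmult1 mI c z) = lmult1 mI (map_option (act x) c) (act x z)"
    proof -
      fix c z assume c: "c \<in> carrier1 I" and z: "z \<in> I"
      show "map_option (act x) c \<in> carrier1 I \<and> act x (lmult1 mI c z) = lmult1 mI (map_option (act x) c) (act x z)"
        using c z xS act_closed act_hom by (cases c) (auto simp: carrier1_def)
    qed
    have e1: "act x f = lmult1 mI (map_option (act x) a) (plus S mS (mS x y))"
      using key[OF ab(3) ab(2)] ab(5) act_plus xS yS by simp
    have e2: "plus S mS (mS x y) = lmult1 mI (map_option (act x) b) (act x f)"
    proof -
      have "plus S mS (mS x y) = act x (plus S mS y)" using act_plus xS yS by simp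
      also have "\<dots> = act x (lmult1 mI b f)" using ab(6) by simp
      also have "\<dots> = lmult1 mI (map_option (act x) b) (act x f)" using key[OF ab(4) ab(1)] by simp
      finally show ?thesis .
    qed
    have i1: "act x f \<in> I" using act_closed xS ab(1) by blast
    have i2: "plus S mS (mS x y) \<in> I" using act_closed xS ab(2) act_plus yS by (metis (no_types, lifting))
    show "act x f \<in> Lclass I mI (plus S mS (mS x y))"
      unfolding Lclass_def Lrel_def using i1 i2 e1 e2 key[OF ab(3) ab(2)] key[OF ab(4) ab(1)] by blast
  qed
  have P2: "idems (Wset S mS I mI) (Wmult mS mI act) = {(e, x) \<in> Wset S mS I mI. x \<in> idems S mS}"
  proof (rule set_eqI, rule iffI)
    fix p assume "p \<in> idems (Wset S mS I mI) (Wmult mS mI act)"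
    then show "p \<in> {(e, x) \<in> Wset S mS I mI. x \<in> idems S mS}"
      by (cases p) (auto simp: idems_def Wmult_def Wset_def)
  next
    fix p assume p: "p \<in> {(e, x) \<in> Wset S mS I mI. x \<in> idems S mS}"
    obtain e x where pe: "p = (e, x)" by (cases p)
    have W: "(e,x) \<in> Wset S mS I mI" and xE: "x \<in> idems S mS" using p pe by auto
    have xS: "x \<in> S" and xx: "mS x x = x" using xE by (auto simp: idems_def)
    have px: "plus S mS x = x" using plus_idem[OF adeq xE] .
    have eI: "e \<in> I" and eL: "Lrel I mI e x" using W px by (auto simp: Wset_def Lclass_def)
    have xI: "x \<in> I" using xE EI by blast
    have L: "mI e x = e" "mI x e = x" using lrel_decomp[OF semI idI eL] by auto
    have axx: "act x x = x"
    proof -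
      have "act x (plus S mS x) = plus S mS (mS x x)" using act_plus xS by blast
      thus ?thesis using px xx by simp
    qed
    have "act x x = act x (mI x e)" using L(2) by simp
    also have "\<dots> = mI (act x x) (act x e)" using act_hom xS xI eI by blast
    finally have "act x x = mI x (act x e)" using axx by simp
    hence xe: "mI x (act x e) = x" using axx by simp
    have aeI: "act x e \<in> I" using act_closed xS eI by blast
    have "mI e (act x e) = mI (mI e x) (act x e)" using L by simp
    also have "\<dots> = mI e x" using mIa[OF eI xI aeI] xe by simp
    also have "\<dots> = e" using L by simp
    finally have "mI e (act x e) = e" .
    thus "p \<in> idems (Wset S mS I mI) (Wmult mS mI act)"
      using W pe xx by (simp add: idems_def Wmult_def)
  qed
  have P3: "band_on (idems (Wset S mS I mI) (Wmult mS mI act)) (Wmult mS mI act)"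
    unfolding band_on_def semigroup_on_def
  proof (intro conjI ballI)
    fix p q assume p: "p \<in> idems (Wset S mS I mI) (Wmult mS mI act)"
      and q: "q \<in> idems (Wset S mS I mI) (Wmult mS mI act)"
    obtain e x where pe: "p = (e,x)" by (cases p)
    obtain g y where qe: "q = (g,y)" by (cases q)
    have W1: "(e,x) \<in> Wset S mS I mI" and xE: "x \<in> idems S mS" using p pe P2 by auto
    have W2: "(g,y) \<in> Wset S mS I mI" and yE: "y \<in> idems S mS" using q qe P2 by auto
    have xS: "x \<in> S" and xx: "mS x x = x" using xE by (auto simp: idems_def)
    have yS: "y \<in> S" and yy: "mS y y = y" using yE by (auto simp: idems_def)
    have px: "plus S mS x = x" using plus_idem[OF adeq xE] .
    have py: "plus S mS y = y" using plus_idem[OF adeq yE] .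
    have xyS: "mS x y \<in> S" using mSc xS yS by blast
    have xyc: "mS x y = mS y x" using commS xE yE by blast
    have "mS (mS x y) (mS x y) = mS x y"
    proof -
      have "mS (mS x y) (mS x y) = mS x (mS y (mS x y))" using mSa[OF xS yS xyS] .
      also have "mS y (mS x y) = mS x y" using xyc mSa[OF yS yS xS] yy by simp
      also have "mS x (mS x y) = mS x y" using mSa[OF xS xS yS] xx by simp
      finally show ?thesis .
    qed
    hence xyE: "mS x y \<in> idems S mS" using xyS by (simp add: idems_def)
    have pxy: "plus S mS (mS x y) = mS x y" using plus_idem[OF adeq xyE] .
    have eI: "e \<in> I" and eL: "Lrel I mI e x" using W1 px by (auto simp: Wset_def Lclass_def)
    have gI: "g \<in> I" and gL: "g \<in> Lclass I mI (plus S mS y)" using W2 by (auto simp: Wset_def)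
    have kL: "Lrel I mI (act x g) (mS x y)"
    proof -
      have "act x g \<in> Lclass I mI (plus S mS (mS x y))" using P1 xS yS gL by blast
      thus ?thesis using pxy by (simp add: Lclass_def)
    qed
    have xI: "x \<in> I" using xE EI by blast
    have yI: "y \<in> I" using yE EI by blast
    have xyI: "mS x y \<in> I" using xyE EI by blast
    have L: "mI e x = e" "mI x e = x" using lrel_decomp[OF semI idI eL] by auto
    have K: "act x g \<in> I" "mI (act x g) (mS x y) = act x g" "mI (mS x y) (act x g) = mS x y"
      using lrel_decomp[OF semI idI kL] by auto
    have xyI': "mS x y = mI x y" "mS y x = mI y x" using sub xE yE by auto
    have ekI: "mI e (act x g) \<in> I" using mIc eI K(1) by blast
    have r1: "mI (mI e (act x g)) (mS x y) = mI e (act x g)"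
      using mIa[OF eI K(1) xyI] K(2) by simp
    have "mI (mS x y) (mI e (act x g)) = mI (mI y x) (mI e (act x g))" using xyc xyI' by simp
    also have "\<dots> = mI y (mI x (mI e (act x g)))" using mIa[OF yI xI ekI] .
    also have "\<dots> = mI y (mI (mI x e) (act x g))" using mIa[OF xI eI K(1)] by simp
    also have "\<dots> = mI (mI y x) (act x g)" using L mIa[OF yI xI K(1)] by simp
    also have "\<dots> = mS x y" using xyc xyI' K(3) by simp
    finally have r2: "mI (mS x y) (mI e (act x g)) = mS x y" .
    have Lnew: "Lrel I mI (mI e (act x g)) (plus S mS (mS x y))"
      unfolding pxy Lrel_def carrier1_def using ekI xyI r1 r2 by force
    have Wp: "(mI e (act x g), mS x y) \<in> Wset S mS I mI"
      using ekI xyS Lnew by (simp add: Wset_def Lclass_def)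
    show "Wmult mS mI act p q \<in> idems (Wset S mS I mI) (Wmult mS mI act)"
      using P2 Wp xyE pe qe by (simp add: Wmult_def)
  next
    fix p q r assume p: "p \<in> idems (Wset S mS I mI) (Wmult mS mI act)"
      and q: "q \<in> idems (Wset S mS I mI) (Wmult mS mI act)"
      and r: "r \<in> idems (Wset S mS I mI) (Wmult mS mI act)"
    obtain e x where pe: "p = (e,x)" by (cases p)
    obtain g y where qe: "q = (g,y)" by (cases q)
    obtain h z where re: "r = (h,z)" by (cases r)
    have A: "e \<in> I" "x \<in> S" using p pe by (auto simp: idems_def Wset_def)
    have B: "g \<in> I" "y \<in> S" using q qe by (auto simp: idems_def Wset_def)
    have C: "h \<in> I" "z \<in> S" using r re by (auto simp: idems_def Wset_def)
    have yh: "act y h \<in> I" using act_closed B C by blast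
    have xg: "act x g \<in> I" using act_closed A B by blast
    have xyh: "act x (act y h) \<in> I" using act_closed A yh by blast
    have "mI (mI e (act x g)) (act (mS x y) h) = mI e (act x (mI g (act y h)))"
    proof -
      have "act (mS x y) h = act x (act y h)" using act_assoc A B C by blast
      hence "mI (mI e (act x g)) (act (mS x y) h) = mI e (mI (act x g) (act x (act y h)))"
        using mIa[OF A(1) xg xyh] by simp
      also have "\<dots> = mI e (act x (mI g (act y h)))" using act_hom A(2) B(1) yh by simp
      finally show ?thesis .
    qed
    moreover have "mS (mS x y) z = mS x (mS y z)" using mSa A B C by blast
    ultimately show "Wmult mS mI act (Wmult mS mI act p q) r = Wmult mS mI act p (Wmult mS mI act q r)"
      using pe qe re by (simp add: Wmult_def)
  next
    fix p assume "p \<in> idems (Wset S mS I mI) (Wmult mS mI act)"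
    thus "Wmult mS mI act p p = p" by (simp add: idems_def)
  qed
  show ?thesis by (rule conjI[OF P1 conjI[OF P2 P3]])
qed

end
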